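(* Let $\mathrm{sol}^\star=(x^\star,y^\star,z^\star,\rho^\star,\lambda^\star,\mu^\star,\nu^\star,\eta^\star)$ be any optimizer of problem (P4) below, and assume that $\rho^{(l),\star}_e(t)\ge\epsilon(\beta)$ for all $e\in\mathcal E$, $t\in\mathcal T$, $l\in\mathcal L$. Then $\nu^{(l),\star}_e(t)\rho^{(l),\star}_e(t)\ge0$ for all $e,t,l$.
   Context: Data: integers $n,T,N\ge1$, $\mathcal E=\{1,\dots,n\}$, $\mathcal T=\{0,\dots,T-1\}$, $\mathcal L=\{1,\dots,N\}$, $\mathcal O=\{1,\dots,m\}$; speed-limit values $0<\gamma^{(1)}<\dots<\gamma^{(m)}$; for each $e$: $h_e>0$, $\bar\rho_e>0$, $\bar f_e>0$, $\bar u_e>0$ with $\bar u_e\bar\rho_e>\bar f_e$, $\tau_e=\bar f_e/(\bar u_e\bar\rho_e-\bar f_e)$; constants $\bar\eta>0$, $\epsilon(\beta)>0$; for each sample $l$ given data $\omega^{(l)}(t)\ge0$, initial densities $\rho^{(l)}_e(0)\ge0$, and $\kappa^{(l)}_e(t)=\frac{1-r^{o,(l)}_{e-1}(t)}{1-r^{in,(l)}_e(t)}$ with $r^{o,(l)},r^{in,(l)}\in[0,1)$. Problem (P4): maximize $-\lambda\epsilon(\beta)-\frac1N\sum_{e,t,l}\bar f_e\bar\rho_e\eta^{(l)}_e(t)+\frac1N\sum_{e,t,l}\nu^{(l)}_e(t)\rho^{(l)}_e(t)$ over $x_{e,i}(t),y^{(l)}_{e,i}(t),z^{(l)}_{e,i}(t),\rho^{(l)}_e(t),\lambda,\mu^{(l)}_e(t),\nu^{(l)}_e(t),\eta^{(l)}_e(t)$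 subject to, for all $e,i,t,l$: (speed limits) $x_{e,i}(t)\in\{0,1\}$, $\sum_{i}x_{e,i}(t)=1$, $\gamma^{(1)}\le\sum_i\gamma^{(i)}x_{e,i}(t)\le\gamma^{(m)}$; (linearization) $0\le z^{(l)}_{e,i}(t)\le\bar\eta x_{e,i}(t)$, $\eta^{(l)}_e(t)-\bar\eta(1-x_{e,i}(t))\le z^{(l)}_{e,i}(t)\le\eta^{(l)}_e(t)$, $0\le y^{(l)}_{e,i}(t)\le\bar\rho_ex_{e,i}(t)$, $\rho^{(l)}_e(t)-\bar\rho_e(1-x_{e,i}(t))\le y^{(l)}_{e,i}(t)\le\rho^{(l)}_e(t)$; (sample trajectories) $\rho^{(l)}_1(t+1)=\rho^{(l)}_1(t)+h_1\omega^{(l)}(t)-h_1\sum_i\gamma^{(i)}y^{(l)}_{1,i}(t)$; for $e\ge2$: $\rho^{(l)}_e(t+1)=\rho^{(l)}_e(t)+h_e\kappa^{(l)}_e(t)\sum_i\gamma^{(i)}y^{(l)}_{e-1,i}(t)-h_e\sum_i\gamma^{(i)}y^{(l)}_{e,i}(t)$ and $\kappa^{(l)}_e(t)\sum_i\gamma^{(i)}y^{(l)}_{e-1,i}(t)\le\min\{\bar f_e,\tau_e\bar u_e(\bar\rho_e-\rho^{(l)}_e(t))\}$; $\rho^{(l)}_e(0)$ equal to the given data; (dual constraints) $\sum_i\gamma^{(i)}(\bar\rho_e-\bar f_e/\bar u_e)z^{(l)}_{e,i}(t)-\mu^{(l)}_e(t)+\bar f_e\eta^{(l)}_e(t)\ge0$;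 $\nu^{(l)}_e(t)=\mu^{(l)}_e(t)+\frac1T\sum_i\gamma^{(i)}x_{e,i}(t)$; $\max_{e,t}|\nu^{(l)}_e(t)|\le\lambda$; $0\le\eta^{(l)}_e(t)\le\bar\eta$. *)

theory Defs
  imports Main "HOL-Library.Extended_Real" Complex_Main
begin

text \<open>Data of problem (P4). Index conventions:
  cells e in {1..n}, times t in {0..<T}, samples l in {1..N}, speed-limit options i in {1..m}.\<close>

record p4_data =
  nE    :: nat
  nT    :: nat
  nN    :: nat
  nm    :: nat
  gam   :: "nat \<Rightarrow> real"
  hh    :: "nat \<Rightarrow> real"
  rhob  :: "nat \<Rightarrow> real"
  fb    :: "nat \<Rightarrow> real"
  ub    :: "nat \<Rightarrow> real"
  etab  :: real
  eps   :: real
  omega :: "nat \<Rightarrow> nat \<Rightarrow> real"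
  rho0  :: "nat \<Rightarrow> nat \<Rightarrow> real"
  rout  :: "nat \<Rightarrow> nat \<Rightarrow> nat \<Rightarrow> real"
  rin   :: "nat \<Rightarrow> nat \<Rightarrow> nat \<Rightarrow> real"

definition tau :: "p4_data \<Rightarrow> nat \<Rightarrow> real" where
  "tau D e = fb D e / (ub D e * rhob D e - fb D e)"

definition kappa :: "p4_data \<Rightarrow> nat \<Rightarrow> nat \<Rightarrow> nat \<Rightarrow> real" where
  "kappa D l e t = (1 - rout D l (e - 1) t) / (1 - rin D l e t)"

definition p4_data_ok :: "p4_data \<Rightarrow> bool" where
  "p4_data_ok D \<longleftrightarrow>
     nE D \<ge> 1 \<and> nT D \<ge> 1 \<and> nN D \<ge> 1 \<and> nm D \<ge> 1 \<and>
     0 < gam D 1 \<and> (\<forall>i\<in>{1..<nm D}. gam D i < gam D (i + 1)) \<and>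
     (\<forall>e\<in>{1..nE D}. hh D e > 0 \<and> rhob D e > 0 \<and> fb D e > 0 \<and> ub D e > 0 \<and>
                     ub D e * rhob D e > fb D e) \<and>
     etab D > 0 \<and> eps D > 0 \<and>
     (\<forall>l\<in>{1..nN D}. \<forall>t\<in>{0..<nT D}. omega D l t \<ge> 0) \<and>
     (\<forall>l\<in>{1..nN D}. \<forall>e\<in>{1..nE D}. rho0 D l e \<ge> 0) \<and>
     (\<forall>l\<in>{1..nN D}. \<forall>e\<in>{1..nE D}. \<forall>t\<in>{0..<nT D}.
        0 \<le> rout D l e t \<and> rout D l e t < 1 \<and> 0 \<le> rin D l e t \<and> rin D l e t < 1)"

text \<open>Decision variables of (P4). Argument order: x e i t; y l e i t; z l e i t;
  rho l e t (t in {0..T}); mu, nu, eta l e t.\<close>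

record p4_sol =
  sx   :: "nat \<Rightarrow> nat \<Rightarrow> nat \<Rightarrow> real"
  sy   :: "nat \<Rightarrow> nat \<Rightarrow> nat \<Rightarrow> nat \<Rightarrow> real"
  sz   :: "nat \<Rightarrow> nat \<Rightarrow> nat \<Rightarrow> nat \<Rightarrow> real"
  srho :: "nat \<Rightarrow> nat \<Rightarrow> nat \<Rightarrow> real"
  slam :: real
  smu  :: "nat \<Rightarrow> nat \<Rightarrow> nat \<Rightarrow> real"
  snu  :: "nat \<Rightarrow> nat \<Rightarrow> nat \<Rightarrow> real"
  seta :: "nat \<Rightarrow> nat \<Rightarrow> nat \<Rightarrow> real"

definition p4_objective :: "p4_data \<Rightarrow> p4_sol \<Rightarrow> real" where
  "p4_objective D s =
     - slam s * eps D
     - (1 / real (nN D)) * (\<Sum>e\<in>{1..nE D}. \<Sum>t\<in>{0..<nT D}. \<Sum>l\<in>{1..nN D}.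
            fb D e * rhob D e * seta s l e t)
     + (1 / real (nN D)) * (\<Sum>e\<in>{1..nE D}. \<Sum>t\<in>{0..<nT D}. \<Sum>l\<in>{1..nN D}.
            snu s l e t * srho s l e t)"

definition p4_feasible :: "p4_data \<Rightarrow> p4_sol \<Rightarrow> bool" where
  "p4_feasible D s \<longleftrightarrow>
    (let n = nE D; T = nT D; N = nN D; m = nm D;
         x = sx s; y = sy s; z = sz s; rho = srho s; lam = slam s;
         mu = smu s; nu = snu s; eta = seta s;
         g = gam D in
    \<comment> \<open>speed limits\<close>
    (\<forall>e\<in>{1..n}. \<forall>t\<in>{0..<T}.
        (\<forall>i\<in>{1..m}. x e i t \<in> {0, 1}) \<and>
        (\<Sum>i\<in>{1..m}. x e i t) = 1 \<and>
        g 1 \<le> (\<Sum>i\<in>{1..m}. g i * x e i t) \<and> (\<Sum>i\<in>{1..m}. g i * x e i t) \<le> g m) \<and>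
    \<comment> \<open>linearization\<close>
    (\<forall>l\<in>{1..N}. \<forall>e\<in>{1..n}. \<forall>i\<in>{1..m}. \<forall>t\<in>{0..<T}.
        0 \<le> z l e i t \<and> z l e i t \<le> etab D * x e i t \<and>
        eta l e t - etab D * (1 - x e i t) \<le> z l e i t \<and> z l e i t \<le> eta l e t \<and>
        0 \<le> y l e i t \<and> y l e i t \<le> rhob D e * x e i t \<and>
        rho l e t - rhob D e * (1 - x e i t) \<le> y l e i t \<and> y l e i t \<le> rho l e t) \<and>
    \<comment> \<open>sample trajectories\<close>
    (\<forall>l\<in>{1..N}. \<forall>t\<in>{0..<T}.
        rho l 1 (t + 1) = rho l 1 t + hh D 1 * omega D l t
                          - hh D 1 * (\<Sum>i\<in>{1..m}. g i * y l 1 i t)) \<and>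
    (\<forall>l\<in>{1..N}. \<forall>e\<in>{2..n}. \<forall>t\<in>{0..<T}.
        rho l e (t + 1) = rho l e t
            + hh D e * kappa D l e t * (\<Sum>i\<in>{1..m}. g i * y l (e - 1) i t)
            - hh D e * (\<Sum>i\<in>{1..m}. g i * y l e i t) \<and>
        kappa D l e t * (\<Sum>i\<in>{1..m}. g i * y l (e - 1) i t)
            \<le> min (fb D e) (tau D e * ub D e * (rhob D e - rho l e t))) \<and>
    (\<forall>l\<in>{1..N}. \<forall>e\<in>{1..n}. rho l e 0 = rho0 D l e) \<and>
    \<comment> \<open>dual constraints\<close>
    (\<forall>l\<in>{1..N}. \<forall>e\<in>{1..n}. \<forall>t\<in>{0..<T}.
        (\<Sum>i\<in>{1..m}. g i * (rhob D e - fb D e / ub D e) * z l e i t)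
            - mu l e t + fb D e * eta l e t \<ge> 0 \<and>
        nu l e t = mu l e t + (1 / real T) * (\<Sum>i\<in>{1..m}. g i * x e i t) \<and>
        0 \<le> eta l e t \<and> eta l e t \<le> etab D) \<and>
    (\<forall>l\<in>{1..N}. (MAX et\<in>{1..n} \<times> {0..<T}. \<bar>nu l (fst et) (snd et)\<bar>) \<le> lam))"

definition p4_optimizer :: "p4_data \<Rightarrow> p4_sol \<Rightarrow> bool" where
  "p4_optimizer D s \<longleftrightarrow>
     p4_feasible D s \<and> (\<forall>s'. p4_feasible D s' \<longrightarrow> p4_objective D s' \<le> p4_objective D s)"

end

theory Submission
  imports Defs
begin

lemma gam_pos:
  assumes "p4_data_ok D" "i \<in> {1..nm D}"
  shows "gam D i > 0"
proof -
  have inc: "\<And>k. 1 \<le> k \<Longrightarrow> k < nm D \<Longrightarrow> gam D k < gam D (k+1)"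
    using assms(1) by (auto simp: p4_data_ok_def)
  have g1: "gam D 1 > 0" using assms(1) by (simp add: p4_data_ok_def)
  have "\<And>j. 1 \<le> j \<Longrightarrow> j \<le> nm D \<Longrightarrow> gam D j > 0"
  proof -
    fix j :: nat assume "1 \<le> j" "j \<le> nm D"
    then show "gam D j > 0"
    proof (induction j rule: nat_induct_at_least)
      case base then show ?case using g1 by simp
    next
      case (Suc k)
      then have "gam D k < gam D (k+1)" using inc by simp
      then show ?case using Suc by simp
    qed
  qed
  then show ?thesis using assms(2) by auto
qed

lemma feas_parts:
  assumes "p4_feasible D s" "e \<in> {1..nE D}" "t \<in> {0..<nT D}" "l \<in> {1..nN D}"
  shows "snu s l e t = smu s l e t + (1 / real (nT D)) * (\<Sum>i\<in>{1..nm D}. gam D i * sx s e i t)"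
    "gam D 1 \<le> (\<Sum>i\<in>{1..nm D}. gam D i * sx s e i t)"
    "\<forall>i\<in>{1..nm D}. 0 \<le> sz s l e i t"
    "seta s l e t \<ge> 0"
    "(\<Sum>i\<in>{1..nm D}. gam D i * (rhob D e - fb D e / ub D e) * sz s l e i t)
            - smu s l e t + fb D e * seta s l e t \<ge> 0"
  using assms unfolding p4_feasible_def Let_def by simp_all

lemma feas_max:
  assumes "p4_feasible D s" "l \<in> {1..nN D}"
  shows "(MAX et\<in>{1..nE D} \<times> {0..<nT D}. \<bar>snu s l (fst et) (snd et)\<bar>) \<le> slam s"
  using assms unfolding p4_feasible_def Let_def by simp

lemma feas_update:
 assumes "p4_feasible D s"
 and "\<forall>l\<in>{1..nN D}. \<forall>e\<in>{1..nE D}. \<forall>t\<in>{0..<nT D}.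
        (\<Sum>i\<in>{1..nm D}. gam D i * (rhob D e - fb D e / ub D e) * sz s l e i t)
            - mu l e t + fb D e * seta s l e t \<ge> 0 \<and>
        nu l e t = mu l e t + (1 / real (nT D)) * (\<Sum>i\<in>{1..nm D}. gam D i * sx s e i t)"
 and "\<forall>l\<in>{1..nN D}. (MAX et\<in>{1..nE D} \<times> {0..<nT D}. \<bar>nu l (fst et) (snd et)\<bar>) \<le> slam s"
 shows "p4_feasible D (s\<lparr>smu := mu, snu := nu\<rparr>)"
 using assms unfolding p4_feasible_def Let_def by simp

lemma sum3_delta:
  fixes c :: real
  assumes "e0 \<in> A" "t0 \<in> B" "l0 \<in> C" "finite A" "finite B" "finite C"
  shows "(\<Sum>e\<in>A. \<Sum>t\<in>B. \<Sum>l\<in>C. (if l = l0 \<and> e = e0 \<and> t = t0 then c else 0)) = c"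
proof -
  have "(\<Sum>e\<in>A. \<Sum>t\<in>B. \<Sum>l\<in>C. (if l = l0 \<and> e = e0 \<and> t = t0 then c else 0))
      = (\<Sum>e\<in>A. \<Sum>t\<in>B. (if e = e0 \<and> t = t0 then c else 0))"
    by (intro sum.cong refl) (auto simp: assms)
  also have "\<dots> = (\<Sum>e\<in>A. (if e = e0 then c else 0))"
    by (intro sum.cong refl) (auto simp: assms)
  also have "\<dots> = c" using assms by simp
  finally show ?thesis .
qed

theorem proposition1:
  fixes D :: p4_data and s :: p4_sol
  assumes "p4_data_ok D"
    and "p4_optimizer D s"
    and "\<forall>e\<in>{1..nE D}. \<forall>t\<in>{0..<nT D}. \<forall>l\<in>{1..nN D}. srho s l e t \<ge> eps D"
  shows "\<forall>e\<in>{1..nE D}. \<forall>t\<in>{0..<nT D}. \<forall>l\<in>{1..nN D}. snu s l e t * srho s l e t \<ge> 0"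
proof (rule ccontr)
  assume "\<not> ?thesis"
  then obtain e0 t0 l0 where pt: "e0 \<in> {1..nE D}" "t0 \<in> {0..<nT D}" "l0 \<in> {1..nN D}"
    and neg: "snu s l0 e0 t0 * srho s l0 e0 t0 < 0" by force
  have ok: "p4_data_ok D" by fact
  have feas: "p4_feasible D s" and opt: "\<forall>s'. p4_feasible D s' \<longrightarrow> p4_objective D s' \<le> p4_objective D s"
    using assms(2) by (auto simp: p4_optimizer_def)
  have "eps D > 0" using ok by (simp add: p4_data_ok_def)
  then have rpos: "srho s l0 e0 t0 > 0" using assms(3) pt by force
  have nuneg: "snu s l0 e0 t0 < 0" using neg rpos by (simp add: mult_less_0_iff)
  define P where "P = (\<lambda>l e t. l = l0 \<and> e = e0 \<and> t = t0)"
  define mu' where "mu' = (\<lambda>l e t. if P l e t then smu s l e t - snu s l e t else smu s l e t)"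
  define nu' where "nu' = (\<lambda>l e t. if P l e t then 0 else snu s l e t)"
  define s' where "s' = s\<lparr>smu := mu', snu := nu'\<rparr>"
  note fp = feas_parts[OF feas pt]
  have gp: "gam D 1 > 0" using ok by (simp add: p4_data_ok_def)
  have T1: "real (nT D) > 0" using ok by (simp add: p4_data_ok_def)
  have munew: "smu s l0 e0 t0 - snu s l0 e0 t0 \<le> 0"
    using fp(1,2) gp T1 by simp
  have rhs: "(\<Sum>i\<in>{1..nm D}. gam D i * (rhob D e0 - fb D e0 / ub D e0) * sz s l0 e0 i t0)
            + fb D e0 * seta s l0 e0 t0 \<ge> 0"
  proof -
    have e: "rhob D e0 > fb D e0 / ub D e0" "fb D e0 > 0"
      using ok pt by (auto simp: p4_data_ok_def pos_divide_less_eq mult.commute)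
    have "(\<Sum>i\<in>{1..nm D}. gam D i * (rhob D e0 - fb D e0 / ub D e0) * sz s l0 e0 i t0) \<ge> 0"
      using e gam_pos[OF ok] fp(3) by (intro sum_nonneg) (simp add: less_imp_le)
    moreover have "seta s l0 e0 t0 \<ge> 0" using fp(4) .
    ultimately show ?thesis using e by simp
  qed
  have c2: "\<forall>l\<in>{1..nN D}. \<forall>e\<in>{1..nE D}. \<forall>t\<in>{0..<nT D}.
        (\<Sum>i\<in>{1..nm D}. gam D i * (rhob D e - fb D e / ub D e) * sz s l e i t)
            - mu' l e t + fb D e * seta s l e t \<ge> 0 \<and>
        nu' l e t = mu' l e t + (1 / real (nT D)) * (\<Sum>i\<in>{1..nm D}. gam D i * sx s e i t)"
  proof (intro ballI)
    fix l e t assume a: "l \<in> {1..nN D}" "e \<in> {1..nE D}" "t \<in> {0..<nT D}"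
    note q = feas_parts[OF feas a(2,3,1)]
    show "(\<Sum>i\<in>{1..nm D}. gam D i * (rhob D e - fb D e / ub D e) * sz s l e i t)
            - mu' l e t + fb D e * seta s l e t \<ge> 0 \<and>
        nu' l e t = mu' l e t + (1 / real (nT D)) * (\<Sum>i\<in>{1..nm D}. gam D i * sx s e i t)"
    proof (cases "P l e t")
      case True
      then have "l = l0" "e = e0" "t = t0" by (auto simp: P_def)
      then show ?thesis using True rhs munew fp(1) by (simp add: mu'_def nu'_def)
    next
      case False
      then show ?thesis using q(1,5) by (simp add: mu'_def nu'_def)
    qed
  qed
  have ne: "{1..nE D} \<times> {0..<nT D} \<noteq> {}" using ok by (auto simp: p4_data_ok_def)
  have c3: "\<forall>l\<in>{1..nN D}. (MAX et\<in>{1..nE D} \<times> {0..<nT D}. \<bar>nu' l (fst et) (snd et)\<bar>) \<le> slam s"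
  proof
    fix l assume l: "l \<in> {1..nN D}"
    have "(MAX et\<in>{1..nE D} \<times> {0..<nT D}. \<bar>nu' l (fst et) (snd et)\<bar>)
          \<le> (MAX et\<in>{1..nE D} \<times> {0..<nT D}. \<bar>snu s l (fst et) (snd et)\<bar>)"
    proof (subst Max_le_iff)
      show "finite ((\<lambda>et. \<bar>nu' l (fst et) (snd et)\<bar>) ` ({1..nE D} \<times> {0..<nT D}))" by simp
      show "(\<lambda>et. \<bar>nu' l (fst et) (snd et)\<bar>) ` ({1..nE D} \<times> {0..<nT D}) \<noteq> {}" using ne by simp
      show "\<forall>a\<in>(\<lambda>et. \<bar>nu' l (fst et) (snd et)\<bar>) ` ({1..nE D} \<times> {0..<nT D}).
              a \<le> (MAX et\<in>{1..nE D} \<times> {0..<nT D}. \<bar>snu s l (fst et) (snd et)\<bar>)"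
      proof
        fix a assume "a \<in> (\<lambda>et. \<bar>nu' l (fst et) (snd et)\<bar>) ` ({1..nE D} \<times> {0..<nT D})"
        then obtain et where et: "et \<in> {1..nE D} \<times> {0..<nT D}" and a: "a = \<bar>nu' l (fst et) (snd et)\<bar>" by auto
        have "a \<le> \<bar>snu s l (fst et) (snd et)\<bar>" using a by (simp add: nu'_def)
        also have "\<dots> \<le> (MAX et\<in>{1..nE D} \<times> {0..<nT D}. \<bar>snu s l (fst et) (snd et)\<bar>)"
          using et by (intro Max_ge) auto
        finally show "a \<le> (MAX et\<in>{1..nE D} \<times> {0..<nT D}. \<bar>snu s l (fst et) (snd et)\<bar>)" .
      qed
    qed
    also have "\<dots> \<le> slam s" using feas_max[OF feas l] .
    finally show "(MAX et\<in>{1..nE D} \<times> {0..<nT D}. \<bar>nu' l (fst et) (snd et)\<bar>) \<le> slam s" .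
  qed
  have feas': "p4_feasible D s'"
    unfolding s'_def by (rule feas_update[OF feas c2 c3])
  let ?c = "snu s l0 e0 t0 * srho s l0 e0 t0"
  have pw: "\<And>l e t. nu' l e t * srho s l e t
      = snu s l e t * srho s l e t - (if l = l0 \<and> e = e0 \<and> t = t0 then ?c else 0)"
    by (simp add: nu'_def P_def)
  have sumeq: "(\<Sum>e\<in>{1..nE D}. \<Sum>t\<in>{0..<nT D}. \<Sum>l\<in>{1..nN D}. nu' l e t * srho s l e t)
     = (\<Sum>e\<in>{1..nE D}. \<Sum>t\<in>{0..<nT D}. \<Sum>l\<in>{1..nN D}. snu s l e t * srho s l e t) - ?c"
    unfolding pw sum_subtractf using sum3_delta[OF pt(1,2,3), of ?c] by simp
  have N1: "real (nN D) > 0" using ok by (simp add: p4_data_ok_def)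
  have "p4_objective D s' = p4_objective D s - (1 / real (nN D)) * ?c"
    unfolding p4_objective_def s'_def using sumeq by (simp add: diff_divide_distrib)
  moreover have "(1 / real (nN D)) * ?c < 0" using neg N1 by (simp add: divide_neg_pos)
  ultimately have obj: "p4_objective D s' > p4_objective D s" by simp
  show False using opt feas' obj by force
qed
end
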